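(* Let $\bar u=(u_\beta)_{\beta<\alpha}$ be a densely non-increasing sequence of elements of a linear order $(U,<)$. If $\bar u$ is not non-increasing, then there exists a greatest ordinal $\alpha'<\alpha$ such that $(u_\beta)_{\beta<\alpha'}$ is non-increasing; moreover $\alpha'$ is a limit ordinal and $\bar u$ is not ultimately constant in $\alpha'$.
   Context: A sequence $(u_\beta)_{\beta<\alpha}$ indexed by a countable ordinal is non-increasing if $\beta<\beta'<\alpha$ implies $u_\beta\ge u_{\beta'}$. It is constant on $[\gamma,\gamma')$ if $u_\beta=u_\gamma$ for all $\gamma\le\beta<\gamma'$. It is densely non-increasing if for all $\gamma<\gamma'\le\alpha$, either it is constant on $[\gamma,\gamma')$ or there exist $\gamma\le\beta<\beta'<\gamma'$ with $u_\beta>u_{\beta'}$. For a limit ordinal $\gamma\le\alpha$, the sequence is ultimately constant in $\gamma$ if there is $\gamma'<\gamma$ such that it is constant on $[\gamma',\gamma)$. *)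

theory Defs
  imports "HOL-Library.Countable_Set"
begin

text \<open>Ordinals are modelled as elements of an arbitrary well-ordered type 'i;
  the ordinals below alpha are the elements below alpha.\<close>

definition non_increasing :: "'i::wellorder \<Rightarrow> ('i \<Rightarrow> 'u::linorder) \<Rightarrow> bool" where
  "non_increasing \<alpha> u \<longleftrightarrow> (\<forall>\<beta> \<beta>'. \<beta> < \<beta>' \<and> \<beta>' < \<alpha> \<longrightarrow> u \<beta> \<ge> u \<beta>')"

definition constant_on :: "('i::wellorder \<Rightarrow> 'u) \<Rightarrow> 'i \<Rightarrow> 'i \<Rightarrow> bool" where
  "constant_on u \<gamma> \<gamma>' \<longleftrightarrow> (\<forall>\<beta>. \<gamma> \<le> \<beta> \<and> \<beta> < \<gamma>' \<longrightarrow> u \<beta> = u \<gamma>)"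

definition densely_non_increasing :: "'i::wellorder \<Rightarrow> ('i \<Rightarrow> 'u::linorder) \<Rightarrow> bool" where
  "densely_non_increasing \<alpha> u \<longleftrightarrow>
     (\<forall>\<gamma> \<gamma>'. \<gamma> < \<gamma>' \<and> \<gamma>' \<le> \<alpha> \<longrightarrow>
        constant_on u \<gamma> \<gamma>' \<or> (\<exists>\<beta> \<beta>'. \<gamma> \<le> \<beta> \<and> \<beta> < \<beta>' \<and> \<beta>' < \<gamma>' \<and> u \<beta> > u \<beta>'))"

definition limit_ord :: "'i::wellorder \<Rightarrow> bool" where
  "limit_ord \<gamma> \<longleftrightarrow> (\<exists>\<beta>. \<beta> < \<gamma>) \<and> (\<forall>\<beta>. \<beta> < \<gamma> \<longrightarrow> (\<exists>\<delta>. \<beta> < \<delta> \<and> \<delta> < \<gamma>))"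

definition ultimately_constant :: "('i::wellorder \<Rightarrow> 'u) \<Rightarrow> 'i \<Rightarrow> bool" where
  "ultimately_constant u \<gamma> \<longleftrightarrow> (\<exists>\<gamma>'. \<gamma>' < \<gamma> \<and> constant_on u \<gamma>' \<gamma>)"

end

theory Submission
  imports Defs
begin

theorem mainTheorem12:
  fixes \<alpha> :: "'i::wellorder" and u :: "'i \<Rightarrow> 'u::linorder"
  assumes "countable {..<\<alpha>}"
    and "densely_non_increasing \<alpha> u"
    and "\<not> non_increasing \<alpha> u"
  shows "\<exists>\<alpha>'. \<alpha>' < \<alpha> \<and> non_increasing \<alpha>' u
            \<and> (\<forall>\<delta>. \<delta> < \<alpha> \<and> non_increasing \<delta> u \<longrightarrow> \<delta> \<le> \<alpha>')
            \<and> limit_ord \<alpha>' \<and> \<not> ultimately_constant u \<alpha>'"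
proof -
  define P where "P = (\<lambda>b'. \<exists>b. b < b' \<and> u b < u b')"
  obtain b0 b0' where b0: "b0 < b0'" "b0' < \<alpha>" "u b0 < u b0'"
    using assms(3) unfolding non_increasing_def by (auto simp: not_le)
  have Pb0: "P b0'" using b0 unfolding P_def by auto
  define a where "a = (LEAST x. P x)"
  have Pa: "P a" unfolding a_def using Pb0 by (rule LeastI)
  have aless: "a < \<alpha>" using Least_le[of P b0', OF Pb0] b0(2) unfolding a_def by simp
  have minP: "\<And>x. x < a \<Longrightarrow> \<not> P x" unfolding a_def by (rule not_less_Least)
  have ni: "non_increasing a u"
    unfolding non_increasing_def
  proof (intro allI impI)
    fix b b' :: 'i assume h: "b < b' \<and> b' < a"
    show "u b \<ge> u b'"
    proof (rule ccontr)
      assume "\<not> u b \<ge> u b'"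
      then have "P b'" using h unfolding P_def by (auto simp: not_le)
      with minP h show False by blast
    qed
  qed
  obtain b where b: "b < a" "u b < u a" using Pa unfolding P_def by auto
  have maxi: "\<forall>\<delta>. \<delta> < \<alpha> \<and> non_increasing \<delta> u \<longrightarrow> \<delta> \<le> a"
  proof (intro allI impI)
    fix d :: 'i assume h: "d < \<alpha> \<and> non_increasing d u"
    show "d \<le> a"
    proof (rule ccontr)
      assume "\<not> d \<le> a"
      then have "a < d" by simp
      then have "u b \<ge> u a" using h b(1) unfolding non_increasing_def by blast
      with b(2) show False by simp
    qed
  qed
  define s where "s = (LEAST x. a < x)"
  have as: "a < s" unfolding s_def using aless by (rule LeastI)
  have sle: "s \<le> \<alpha>" unfolding s_def using aless by (rule Least_le)
  have sbetween: "x \<le> a" if "x < s" for x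
  proof -
    have "\<not> a < x" using that unfolding s_def by (rule not_less_Least)
    then show ?thesis by simp
  qed
  have nuc: "\<not> ultimately_constant u a"
  proof
    assume "ultimately_constant u a"
    then obtain g where g: "g < a" "constant_on u g a"
      unfolding ultimately_constant_def by auto
    define e where "e = max b g"
    have e1: "g \<le> e" unfolding e_def by (rule max.cobounded2)
    have e2: "b \<le> e" unfolding e_def by (rule max.cobounded1)
    have e3: "e < a" unfolding e_def using g(1) b(1) by (simp add: max_def)
    note e = e1 e2 e3
    have "u e = u g" using g(2) e1 e3 unfolding constant_on_def by blast
    moreover have "u e \<le> u b"
    proof (cases "b = e")
      case True then show ?thesis by simp
    next
      case False then have "b < e" using e2 by simp
      then show ?thesis using ni e3 unfolding non_increasing_def by blast
    qed
    ultimately have c: "u g < u a" using b(2) by simp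
    have "g < s" using g(1) as by simp
    then have "constant_on u g s \<or> (\<exists>\<beta> \<beta>'. g \<le> \<beta> \<and> \<beta> < \<beta>' \<and> \<beta>' < s \<and> u \<beta> > u \<beta>')"
      using assms(2) sle unfolding densely_non_increasing_def by blast
    then show False
    proof
      assume "constant_on u g s"
      moreover have "g \<le> a" using g(1) by simp
      ultimately have "u a = u g" using as unfolding constant_on_def by blast
      with c show False by simp
    next
      assume "\<exists>\<beta> \<beta>'. g \<le> \<beta> \<and> \<beta> < \<beta>' \<and> \<beta>' < s \<and> u \<beta> > u \<beta>'"
      then obtain x y where xy: "g \<le> x" "x < y" "y < s" "u x > u y" by auto
      have ya: "y \<le> a" using sbetween xy(3) .
      have xa: "x < a" using xy ya by simp
      have ux: "u x = u g" using g(2) xy(1) xa unfolding constant_on_def by blast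
      show False
      proof (cases "y = a")
        case True
        then show ?thesis using ux c xy(4) by simp
      next
        case False
        then have "y < a" using ya by simp
        then have "u y = u g" using g(2) xy(1) xy(2) unfolding constant_on_def using order_less_imp_le order_trans by blast
        then show ?thesis using ux xy(4) by simp
      qed
    qed
  qed
  have lim: "limit_ord a"
    unfolding limit_ord_def
  proof (intro conjI allI impI)
    show "\<exists>\<beta>. \<beta> < a" using b(1) by blast
  next
    fix x assume x: "x < a"
    show "\<exists>\<delta>. x < \<delta> \<and> \<delta> < a"
    proof (rule ccontr)
      assume "\<not> (\<exists>\<delta>. x < \<delta> \<and> \<delta> < a)"
      then have "\<forall>y. x \<le> y \<and> y < a \<longrightarrow> y = x" using order_le_less by blast
      then have "constant_on u x a" unfolding constant_on_def by blast
      with x nuc show False unfolding ultimately_constant_def by blast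
    qed
  qed
  show ?thesis using aless ni maxi lim nuc by blast
qed

end
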